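(* Let $G$ be an abelian group, $w\in G$, and $\alpha:G\to G$ a group automorphism with $\alpha^2=\mathrm{id}$. Define $\beta:G\to G$ by $\beta(u)=\alpha(u)+w$. Let $q_0$ be the cardinality of the subgroup of $G$ generated by $(\alpha+\mathrm{id})(w)$. If $q_0$ is infinite, then every orbit $\{\beta^k(u):k\in\mathbb{Z}\}$ of $\beta$ is infinite. If $q_0$ is finite, then the only possible cardinalities of orbits of $\beta$ are $q_0$ (possible only if $q_0$ is odd) and $2q_0$; orbits of odd cardinality exist if and only if $$( * )\qquad q_0 \text{ is odd and } q_0w\in(\alpha-\mathrm{id})(G)$$ (this holds e.g. if $q_0$ is odd and $(\alpha-\mathrm{id})(G)=\ker(\alpha+\mathrm{id})$). Moreover the numbers of orbits of odd, resp. even, cardinality are $$\nu_{\mathrm{odd}}(\beta)=\begin{cases}\#\ker(\alpha-\mathrm{id})/q_0 & \text{if } ( * ) \text{ holds},\\ 0&\text{otherwise},\end{cases}\qquad \nu_{\mathrm{even}}(\beta)=\begin{cases}\#\bigl(G\setminus\ker(\alpha-\mathrm{id})\bigr)/2q_0 & \text{if } ( * ) \text{ holds},\\ \#G/2q_0&\text{otherwise}.\end{cases}$$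
   Context: $\#$ denotes cardinality; the quotient of an infinite cardinality by a positive integer is understood to be infinite. *)

theory Defs
  imports Complex_Main
begin

definition group_aut :: "('a::ab_group_add \<Rightarrow> 'a) \<Rightarrow> bool" where
  "group_aut f \<longleftrightarrow> bij f \<and> (\<forall>x y. f (x + y) = f x + f y)"

definition subgroup_gen :: "'a::ab_group_add set \<Rightarrow> 'a set" where
  "subgroup_gen S = \<Inter>{H. 0 \<in> H \<and> (\<forall>x\<in>H. \<forall>y\<in>H. x - y \<in> H) \<and> S \<subseteq> H}"

primrec nat_mult :: "nat \<Rightarrow> 'a::ab_group_add \<Rightarrow> 'a" where
  "nat_mult 0 w = 0"
| "nat_mult (Suc n) w = w + nat_mult n w"

definition int_iter :: "('a \<Rightarrow> 'a) \<Rightarrow> int \<Rightarrow> 'a \<Rightarrow> 'a" where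
  "int_iter f k = (if 0 \<le> k then f ^^ nat k else inv f ^^ nat (- k))"

definition orbit_of :: "('a \<Rightarrow> 'a) \<Rightarrow> 'a \<Rightarrow> 'a set" where
  "orbit_of f u = range (\<lambda>k::int. int_iter f k u)"

definition orbits :: "('a \<Rightarrow> 'a) \<Rightarrow> 'a set set" where
  "orbits f = range (orbit_of f)"

end

theory Submission imports Defs begin

lemma nm_add: "nat_mult (m+n) x = nat_mult m x + nat_mult n x"
  by (induct m) (simp_all add: add.assoc)
lemma nm_plus: "nat_mult n (x+y) = nat_mult n x + nat_mult n y"
  by (induct n) (simp_all add: algebra_simps)
lemma nm_zero[simp]: "nat_mult n 0 = 0"
  by (induct n) simp_all
lemma nm_mult: "nat_mult (m*n) x = nat_mult m (nat_mult n x)"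
  by (induct m) (simp_all add: nm_add nm_plus)
lemma nm_minus: "nat_mult n (-x) = - nat_mult n x"
  by (induct n) (simp_all add: algebra_simps)
lemma nm_diff: "nat_mult n (x-y) = nat_mult n x - nat_mult n y"
  by (metis diff_conv_add_uminus nm_plus nm_minus)
lemma nm_sum: "finite A \<Longrightarrow> sum (\<lambda>_. x) A = nat_mult (card A) x"
  by (induct A rule: finite_induct) simp_all
lemma nm_two: "nat_mult 2 x = x + x"
  by (simp add: numeral_2_eq_2)

definition isSG :: "'a::ab_group_add set \<Rightarrow> bool" where
  "isSG H \<longleftrightarrow> 0 \<in> H \<and> (\<forall>x\<in>H. \<forall>y\<in>H. x - y \<in> H)"

lemma sg_is: "isSG (subgroup_gen S)"
  unfolding isSG_def subgroup_gen_def by auto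
lemma sg_incl: "S \<subseteq> subgroup_gen S"
  unfolding subgroup_gen_def by auto
lemma sg_min: "isSG T \<Longrightarrow> S \<subseteq> T \<Longrightarrow> subgroup_gen S \<subseteq> T"
  unfolding isSG_def subgroup_gen_def by auto

lemma isSG_0: "isSG H \<Longrightarrow> 0 \<in> H" by (simp add: isSG_def)
lemma isSG_diff: "isSG H \<Longrightarrow> x \<in> H \<Longrightarrow> y \<in> H \<Longrightarrow> x - y \<in> H" by (simp add: isSG_def)
lemma isSG_uminus: "isSG H \<Longrightarrow> x \<in> H \<Longrightarrow> - x \<in> H"
  using isSG_diff[of H 0 x] isSG_0[of H] by simp
lemma isSG_add: "isSG H \<Longrightarrow> x \<in> H \<Longrightarrow> y \<in> H \<Longrightarrow> x + y \<in> H"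
  using isSG_diff[of H x "-y"] isSG_uminus[of H y] by simp
lemma isSG_nm: "isSG H \<Longrightarrow> x \<in> H \<Longrightarrow> nat_mult n x \<in> H"
  by (induct n) (simp_all add: isSG_0 isSG_add)

lemma sg_annih:
  assumes "isSG H" "finite H" "h \<in> H"
  shows "nat_mult (card H) h = 0"
proof -
  have inj: "inj_on ((+) h) H" by (auto simp: inj_on_def)
  have im: "(+) h ` H = H"
  proof
    show "(+) h ` H \<subseteq> H" using assms by (auto intro: isSG_add)
    show "H \<subseteq> (+) h ` H"
    proof
      fix y assume "y \<in> H"
      then have "y - h \<in> H" using assms isSG_diff by blast
      then show "y \<in> (+) h ` H" by (rule rev_image_eqI) simp
    qed
  qed
  have "sum id H = sum id ((+) h ` H)" using im by simp
  also have "\<dots> = sum ((+) h) H" using sum.reindex[OF inj, of id] by simp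
  also have "\<dots> = sum (\<lambda>_. h) H + sum id H" by (simp add: sum.distrib)
  finally have "sum (\<lambda>_. h) H = 0" by simp
  then show ?thesis by (metis nm_sum[OF assms(2)])
qed

lemma nm_mod:
  assumes "nat_mult n c = 0"
  shows "nat_mult j c = nat_mult (j mod n) c"
proof -
  have "j = n * (j div n) + j mod n" by simp
  then have "nat_mult j c = nat_mult (n * (j div n)) c + nat_mult (j mod n) c"
    by (metis nm_add)
  also have "nat_mult (n * (j div n)) c = 0"
    by (metis mult.commute nm_mult assms nm_zero)
  finally show ?thesis by simp
qed

lemma sg_card_le:
  fixes c :: "'a::ab_group_add"
  assumes "n > 0" "nat_mult n c = 0"
  shows "card (subgroup_gen {c}) \<le> n"
proof -
  let ?R = "range (\<lambda>j. nat_mult j c)"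
  have R: "?R = (\<lambda>j. nat_mult j c) ` {..<n}"
  proof
    show "?R \<subseteq> (\<lambda>j. nat_mult j c) ` {..<n}"
    proof
      fix y assume "y \<in> ?R"
      then obtain j where "y = nat_mult j c" by auto
      then have "y = nat_mult (j mod n) c" using nm_mod[OF assms(2)] by simp
      moreover have "j mod n < n" using assms(1) by simp
      ultimately show "y \<in> (\<lambda>j. nat_mult j c) ` {..<n}" by auto
    qed
  next
    show "(\<lambda>j. nat_mult j c) ` {..<n} \<subseteq> ?R" by blast
  qed
  have neg: "- nat_mult j c = nat_mult ((n - 1) * j) c" for j
  proof -
    have e: "j + (n - 1) * j = n * j" using assms(1)
      by (metis Suc_diff_1 mult_Suc)
    have "nat_mult j c + nat_mult ((n - 1) * j) c = nat_mult (n * j) c"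
      by (simp only: nm_add[symmetric] e)
    also have "\<dots> = 0" by (metis mult.commute nm_mult assms(2) nm_zero)
    finally show ?thesis by (metis add.commute add_eq_0_iff)
  qed
  have "isSG ?R"
    unfolding isSG_def
  proof (intro conjI ballI)
    show "0 \<in> ?R" by (rule range_eqI[of _ _ 0]) simp
    fix x y assume "x \<in> ?R" "y \<in> ?R"
    then obtain i j where "x = nat_mult i c" "y = nat_mult j c" by auto
    then have "x - y = nat_mult (i + (n - 1) * j) c"
      by (metis diff_conv_add_uminus nm_add neg)
    then show "x - y \<in> ?R" by simp
  qed
  moreover have "{c} \<subseteq> ?R" by (auto intro: range_eqI[of _ _ 1])
  ultimately have "subgroup_gen {c} \<subseteq> ?R" by (rule sg_min)
  then have "card (subgroup_gen {c}) \<le> card ?R" by (intro card_mono) (auto simp: R)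
  also have "\<dots> \<le> n" unfolding R by (rule card_image_le[THEN order_trans]) auto
  finally show ?thesis .
qed


lemma sg_odd:
  fixes c :: "'a::ab_group_add"
  assumes fin: "finite (subgroup_gen {c})" and h: "h \<in> subgroup_gen {c}" and ch: "c = h + h"
  shows "odd (card (subgroup_gen {c}))"
proof
  let ?H = "subgroup_gen {c}"
  assume ev: "even (card ?H)"
  then obtain m where m: "card ?H = 2 * m" by auto
  have "0 \<in> ?H" using sg_is isSG_0 by blast
  then have "card ?H > 0" using fin card_gt_0_iff by blast
  then have mpos: "m > 0" using m by simp
  let ?phi = "\<lambda>x::'a. x + x"
  have sub: "?phi ` ?H \<subseteq> ?H" using sg_is isSG_add by blast
  have "isSG (?phi ` ?H)"
    unfolding isSG_def
  proof (intro conjI ballI)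
    show "0 \<in> ?phi ` ?H" using \<open>0 \<in> ?H\<close> by (rule rev_image_eqI) simp
    fix x y assume "x \<in> ?phi ` ?H" "y \<in> ?phi ` ?H"
    then obtain a b where ab: "a \<in> ?H" "b \<in> ?H" "x = a + a" "y = b + b" by auto
    have "a - b \<in> ?H" using ab sg_is isSG_diff by blast
    moreover have "x - y = ?phi (a - b)" using ab by (simp add: algebra_simps)
    ultimately show "x - y \<in> ?phi ` ?H" by blast
  qed
  moreover have "{c} \<subseteq> ?phi ` ?H" using h ch by blast
  ultimately have "?H \<subseteq> ?phi ` ?H" by (rule sg_min)
  with sub have eq: "?phi ` ?H = ?H" by blast
  then have inj: "inj_on ?phi ?H" using fin eq_card_imp_inj_on by metis
  have cH: "c \<in> ?H" using sg_incl by blast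
  have mc: "nat_mult m c \<in> ?H" using cH sg_is isSG_nm by blast
  have "?phi (nat_mult m c) = nat_mult (2 * m) c"
    by (simp add: nm_add mult_2)
  also have "\<dots> = 0" using sg_annih[OF sg_is fin cH] m by simp
  finally have "?phi (nat_mult m c) = ?phi 0" by simp
  then have "nat_mult m c = 0" using inj mc \<open>0 \<in> ?H\<close> by (simp add: inj_on_def)
  then have "card ?H \<le> m" using sg_card_le mpos by blast
  then show False using m mpos by simp
qed

lemma sg_two_torsion:
  assumes "isSG H" "finite H" "odd (card H)" "h \<in> H" "h + h = 0"
  shows "h = 0"
proof -
  obtain m where m: "card H = Suc (2 * m)" using assms(3) oddE by fastforce
  have "nat_mult (2 * m) h = nat_mult m (nat_mult 2 h)" by (metis mult.commute nm_mult)
  also have "\<dots> = 0" using assms(5) by (simp add: nm_two)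
  finally have "nat_mult (card H) h = h" using m by simp
  then show ?thesis using sg_annih[OF assms(1,2,4)] by simp
qed

lemma int_iter_0: "int_iter f 0 = id"
  by (simp add: int_iter_def)

lemma int_iter_plus1:
  assumes "bij f"
  shows "int_iter f (k + 1) x = f (int_iter f k x)"
proof (cases "0 \<le> k")
  case True
  then have "nat (k + 1) = Suc (nat k)" by simp
  then show ?thesis using True by (simp add: int_iter_def)
next
  case False
  then have "nat (- k) = Suc (nat (- (k + 1)))" by simp
  then have "int_iter f k x = inv f (int_iter f (k + 1) x)" using False
    by (simp add: int_iter_def)
  then show ?thesis using assms by (simp add: bij_is_surj surj_f_inv_f)
qed

lemma int_iter_minus1:
  assumes "bij f"
  shows "int_iter f (k - 1) x = inv f (int_iter f k x)"
proof -
  have "int_iter f k x = f (int_iter f (k - 1) x)"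
    using int_iter_plus1[OF assms, of "k - 1"] by simp
  then show ?thesis using assms by (simp add: bij_is_inj inv_f_f)
qed

lemma orbit_self: "u \<in> orbit_of f u"
  unfolding orbit_of_def by (rule range_eqI[of _ _ 0]) (simp add: int_iter_0)

lemma orbit_f: "bij f \<Longrightarrow> x \<in> orbit_of f u \<Longrightarrow> f x \<in> orbit_of f u"
  unfolding orbit_of_def by (auto simp: int_iter_plus1[symmetric])

lemma orbit_inv: "bij f \<Longrightarrow> x \<in> orbit_of f u \<Longrightarrow> inv f x \<in> orbit_of f u"
  unfolding orbit_of_def by (auto simp: int_iter_minus1[symmetric])

lemma orbit_min:
  assumes "bij f" "u \<in> S" "\<And>x. x \<in> S \<Longrightarrow> f x \<in> S" "\<And>x. x \<in> S \<Longrightarrow> inv f x \<in> S"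
  shows "orbit_of f u \<subseteq> S"
proof -
  have "int_iter f k u \<in> S" for k
  proof (induct k rule: int_induct[where k=0])
    case base then show ?case using assms(2) by (simp add: int_iter_0)
  next
    case (step1 i) then show ?case using assms(3) by (simp add: int_iter_plus1[OF assms(1)])
  next
    case (step2 i) then show ?case using assms(4) by (simp add: int_iter_minus1[OF assms(1)])
  qed
  then show ?thesis unfolding orbit_of_def by auto
qed

lemma part_count:
  assumes disj: "\<And>A B. A \<in> F \<Longrightarrow> B \<in> F \<Longrightarrow> A \<noteq> B \<Longrightarrow> A \<inter> B = {}"
    and fc: "\<And>A. A \<in> F \<Longrightarrow> finite A \<and> card A = m" and mpos: "m > 0"
  shows "finite F \<longleftrightarrow> finite (\<Union>F)" and "card (\<Union>F) = m * card F"
proof -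
  show fe: "finite F \<longleftrightarrow> finite (\<Union>F)"
  proof
    assume "finite F" then show "finite (\<Union>F)" using fc by blast
  next
    assume "finite (\<Union>F)"
    then show "finite F" by (rule finite_UnionD)
  qed
  show "card (\<Union>F) = m * card F"
  proof (cases "finite F")
    case True
    have "pairwise disjnt F" using disj unfolding pairwise_def disjnt_def by blast
    then have "card (\<Union>F) = sum card F" using card_Union_disjoint fc by blast
    also have "\<dots> = sum (\<lambda>_. m) F" using fc by simp
    also have "\<dots> = m * card F" by simp
    finally show ?thesis .
  next
    case False then show ?thesis using fe by simp
  qed
qed


locale invo =
  fixes \<alpha> :: "'a::ab_group_add \<Rightarrow> 'a" and w :: 'a
  assumes add: "\<alpha> (x + y) = \<alpha> x + \<alpha> y" and ii: "\<alpha> (\<alpha> x) = x"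
begin

lemma a0: "\<alpha> 0 = 0" using add[of 0 0] by simp
lemma aneg: "\<alpha> (- x) = - \<alpha> x"
  using add[of "-x" x] a0 by (simp add: eq_neg_iff_add_eq_0)
lemma adiff: "\<alpha> (x - y) = \<alpha> x - \<alpha> y"
  by (metis add aneg diff_conv_add_uminus)
lemma anm: "\<alpha> (nat_mult n x) = nat_mult n (\<alpha> x)"
  by (induct n) (simp_all add: a0 add)

definition bt where "bt u = \<alpha> u + w"
definition c where "c = \<alpha> w + w"
definition H where "H = subgroup_gen {c}"
definition cs where "cs x = (+) x ` H"
definition Orb where "Orb u = cs u \<union> cs (bt u)"

lemma bt_bij: "bij bt"
proof (rule bijI)
  show "inj bt" by (rule injI) (metis bt_def add_right_cancel ii)
  show "surj bt" by (rule surjI[of _ "\<lambda>x. \<alpha> (x - w)"]) (simp add: bt_def ii)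
qed

lemma inv_bt: "inv bt x = \<alpha> x - \<alpha> w"
  by (rule inv_f_eq[OF bij_is_inj[OF bt_bij]]) (simp add: bt_def adiff ii)

lemma H_SG: "isSG H" unfolding H_def by (rule sg_is)
lemma cH: "c \<in> H" unfolding H_def using sg_incl by blast
lemma H0: "0 \<in> H" using H_SG isSG_0 by blast
lemma Hadd: "x \<in> H \<Longrightarrow> y \<in> H \<Longrightarrow> x + y \<in> H" using H_SG isSG_add by blast
lemma Hdiff: "x \<in> H \<Longrightarrow> y \<in> H \<Longrightarrow> x - y \<in> H" using H_SG isSG_diff by blast
lemma Hneg: "x \<in> H \<Longrightarrow> - x \<in> H" using H_SG isSG_uminus by blast
lemma Hnm: "x \<in> H \<Longrightarrow> nat_mult n x \<in> H" using H_SG isSG_nm by blast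

lemma alpha_H: "h \<in> H \<Longrightarrow> \<alpha> h = h"
proof -
  have "isSG {x. \<alpha> x = x}" unfolding isSG_def by (simp add: a0 adiff)
  moreover have "\<alpha> c = c" by (simp add: c_def add ii add.commute)
  ultimately have "H \<subseteq> {x. \<alpha> x = x}" unfolding H_def by (intro sg_min) auto
  then show "h \<in> H \<Longrightarrow> \<alpha> h = h" by blast
qed

lemma cs_mem: "y \<in> cs x \<longleftrightarrow> y - x \<in> H"
  unfolding cs_def by (auto simp: image_iff) (metis add.commute diff_add_cancel)

lemma cs_self: "x \<in> cs x" using H0 cs_mem by simp

lemma cs_eq: assumes "y - x \<in> H" shows "cs y = cs x"
proof -
  have "z - y \<in> H \<longleftrightarrow> z - x \<in> H" for z
  proof -
    have e1: "z - x = (z - y) + (y - x)" and e2: "z - y = (z - x) - (y - x)"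
      by (simp_all add: algebra_simps)
    show ?thesis using assms Hadd Hdiff by (metis e1 e2)
  qed
  then show ?thesis unfolding set_eq_iff cs_mem by blast
qed

lemma cs_disj: "y - x \<notin> H \<Longrightarrow> cs x \<inter> cs y = {}"
  using cs_eq cs_mem cs_self by blast

lemma orbit_eq: "orbit_of bt u = Orb u"
proof
  show "orbit_of bt u \<subseteq> Orb u"
  proof (rule orbit_min[OF bt_bij])
    show "u \<in> Orb u" unfolding Orb_def using cs_self by blast
  next
    fix x assume "x \<in> Orb u"
    then consider "x - u \<in> H" | "x - bt u \<in> H" unfolding Orb_def using cs_mem by blast
    then show "bt x \<in> Orb u"
    proof cases
      case 1
      have "bt x - bt u = \<alpha> (x - u)" by (simp add: bt_def adiff)
      then show ?thesis using 1 alpha_H by (simp add: Orb_def cs_mem)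
    next
      case 2
      have "bt x - u = \<alpha> (x - bt u) + c" by (simp add: bt_def adiff add ii c_def; simp add: algebra_simps)
      then show ?thesis using 2 alpha_H cH Hadd by (simp add: Orb_def cs_mem)
    qed
    have "x \<in> cs u \<or> x \<in> cs (bt u)" using \<open>x \<in> Orb u\<close> by (simp add: Orb_def)
    then show "inv bt x \<in> Orb u"
    proof (elim disjE)
      assume "x \<in> cs u" then have 1: "x - u \<in> H" using cs_mem by blast
      have "inv bt x - bt u = \<alpha> (x - u) - c" by (simp add: inv_bt bt_def adiff add c_def; simp add: algebra_simps)
      then show ?thesis using 1 alpha_H cH Hdiff by (simp add: Orb_def cs_mem)
    next
      assume "x \<in> cs (bt u)" then have 2: "x - bt u \<in> H" using cs_mem by blast
      have "inv bt x - u = \<alpha> (x - bt u)" by (simp add: inv_bt bt_def adiff add ii; simp add: algebra_simps)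
      then show ?thesis using 2 alpha_H by (simp add: Orb_def cs_mem)
    qed
  qed
next
  let ?O = "orbit_of bt u"
  let ?Hs = "{h. \<forall>x\<in>?O. x + h \<in> ?O \<and> x - h \<in> ?O}"
  have "isSG ?Hs" unfolding isSG_def
  proof (intro conjI ballI)
    show "0 \<in> ?Hs" by simp
    fix a b assume a: "a \<in> ?Hs" and b: "b \<in> ?Hs"
    show "a - b \<in> ?Hs" unfolding mem_Collect_eq
    proof
      fix x assume x: "x \<in> ?O"
      have e1: "x + (a - b) = (x + a) - b" and e2: "x - (a - b) = (x - a) + b"
        by (simp_all add: algebra_simps)
      show "x + (a - b) \<in> ?O \<and> x - (a - b) \<in> ?O"
        unfolding e1 e2 using a b x by blast
    qed
  qed
  moreover have "c \<in> ?Hs"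
  proof (intro CollectI ballI conjI)
    fix x assume x: "x \<in> ?O"
    have "x + c = bt (bt x)" by (simp add: bt_def add ii c_def; simp add: algebra_simps)
    then show "x + c \<in> ?O" using orbit_f[OF bt_bij] x by metis
    have "x - c = inv bt (inv bt x)" by (simp add: inv_bt adiff ii c_def; simp add: algebra_simps)
    then show "x - c \<in> ?O" using orbit_inv[OF bt_bij] x by metis
  qed
  ultimately have HH: "H \<subseteq> ?Hs" unfolding H_def by (intro sg_min) auto
  have u: "u \<in> ?O" by (rule orbit_self)
  have bu: "bt u \<in> ?O" by (rule orbit_f[OF bt_bij u])
  show "Orb u \<subseteq> ?O"
  proof
    fix y assume "y \<in> Orb u"
    then consider h where "h \<in> H" "y = u + h" | h where "h \<in> H" "y = bt u + h"
      unfolding Orb_def cs_def by blast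
    then show "y \<in> ?O" using HH u bu by cases blast+
  qed
qed


lemma Orb_same:
  assumes "x \<in> Orb u" shows "Orb x = Orb u"
proof -
  have "x - u \<in> H \<or> x - bt u \<in> H" using assms by (simp add: Orb_def cs_mem)
  then show ?thesis
  proof
    assume 1: "x - u \<in> H"
    have "bt x - bt u = \<alpha> (x - u)" by (simp add: bt_def adiff)
    then have "bt x - bt u \<in> H" using 1 alpha_H by simp
    then show ?thesis using 1 cs_eq by (simp add: Orb_def)
  next
    assume 2: "x - bt u \<in> H"
    have "bt x - u = \<alpha> (x - bt u) + c" by (simp add: bt_def adiff add ii c_def; simp add: algebra_simps)
    then have "bt x - u \<in> H" using 2 alpha_H cH Hadd by simp
    then show ?thesis using 2 cs_eq by (auto simp: Orb_def)
  qed
qed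

lemma Orb_disj: "Orb u \<noteq> Orb v \<Longrightarrow> Orb u \<inter> Orb v = {}"
  using Orb_same by blast

lemma Orb_self: "u \<in> Orb u" using cs_self by (simp add: Orb_def)

lemma cs_inj: "inj_on ((+) x) H" by (auto simp: inj_on_def)

lemma cs_card: "card (cs x) = card H"
  unfolding cs_def by (rule card_image[OF cs_inj])

lemma cs_fin: "finite H \<Longrightarrow> finite (cs x)" unfolding cs_def by simp

lemma cs_infin: "infinite H \<Longrightarrow> infinite (cs x)"
  unfolding cs_def using cs_inj finite_imageD by blast

lemma orbit_infinite: "infinite H \<Longrightarrow> infinite (orbit_of bt u)"
  unfolding orbit_eq Orb_def using cs_infin by auto

lemma Orb_card:
  assumes "finite H"
  shows "finite (Orb u) \<and> card (Orb u) = (if bt u - u \<in> H then card H else 2 * card H)"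
proof (cases "bt u - u \<in> H")
  case True
  then have "Orb u = cs u" using cs_eq by (simp add: Orb_def)
  then show ?thesis using True cs_card cs_fin assms by simp
next
  case False
  then have "cs u \<inter> cs (bt u) = {}" by (rule cs_disj)
  then show ?thesis using False cs_card cs_fin assms
    by (simp add: Orb_def card_Un_disjoint)
qed

lemma odd_H:
  assumes "finite H" "bt u - u \<in> H" shows "odd (card H)"
proof -
  let ?h = "bt u - u"
  have "\<alpha> ?h = ?h" using assms(2) alpha_H by simp
  moreover have "\<alpha> ?h + ?h = c" by (simp add: bt_def adiff add ii c_def; simp add: algebra_simps)
  ultimately have "c = ?h + ?h" by simp
  then show ?thesis using sg_odd[of c ?h] assms unfolding H_def by blast
qed

lemma Hpos: "finite H \<Longrightarrow> card H > 0"
  using H0 card_gt_0_iff by blast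

definition S where "S = {u. bt u - u \<in> H}"

lemma Orb_odd_iff:
  assumes "finite H" shows "odd (card (Orb u)) \<longleftrightarrow> u \<in> S"
  using Orb_card[OF assms, of u] odd_H[OF assms, of u] by (auto simp: S_def)

lemma S_Orb: "finite H \<Longrightarrow> x \<in> Orb u \<Longrightarrow> x \<in> S \<longleftrightarrow> u \<in> S"
  using Orb_odd_iff Orb_same by metis

lemma oddO_eq:
  assumes "finite H"
  shows "{Y \<in> orbits bt. finite Y \<and> odd (card Y)} = Orb ` S"
proof -
  have fo: "\<And>u. finite (Orb u)" using Orb_card[OF assms] by blast
  show ?thesis
    unfolding orbits_def orbit_eq[abs_def]
    using fo Orb_odd_iff[OF assms] by blast
qed

lemma evenO_eq:
  assumes "finite H"
  shows "{Y \<in> orbits bt. finite Y \<and> even (card Y)} = Orb ` (UNIV - S)"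
proof -
  have fo: "\<And>u. finite (Orb u)" using Orb_card[OF assms] by blast
  show ?thesis
    unfolding orbits_def orbit_eq[abs_def]
    using fo Orb_odd_iff[OF assms] by blast
qed

lemma Union_S: "finite H \<Longrightarrow> \<Union>(Orb ` S) = S"
  using S_Orb Orb_self by blast

lemma Union_nS: "finite H \<Longrightarrow> \<Union>(Orb ` (UNIV - S)) = UNIV - S"
  using S_Orb Orb_self by blast

lemma count_S:
  assumes "finite H"
  shows "finite (Orb ` S) \<longleftrightarrow> finite S" "card S = card H * card (Orb ` S)"
proof -
  have d: "\<And>A B. A \<in> Orb ` S \<Longrightarrow> B \<in> Orb ` S \<Longrightarrow> A \<noteq> B \<Longrightarrow> A \<inter> B = {}"
    using Orb_disj by blast
  have f: "\<And>A. A \<in> Orb ` S \<Longrightarrow> finite A \<and> card A = card H"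
    using Orb_card[OF assms] by (auto simp: S_def)
  show "finite (Orb ` S) \<longleftrightarrow> finite S" "card S = card H * card (Orb ` S)"
    using part_count[of "Orb ` S" "card H", OF d f Hpos[OF assms]] Union_S[OF assms] by auto
qed

lemma count_nS:
  assumes "finite H"
  shows "finite (Orb ` (UNIV - S)) \<longleftrightarrow> finite (UNIV - S)"
    "card (UNIV - S) = (2 * card H) * card (Orb ` (UNIV - S))"
proof -
  have d: "\<And>A B. A \<in> Orb ` (UNIV - S) \<Longrightarrow> B \<in> Orb ` (UNIV - S) \<Longrightarrow> A \<noteq> B \<Longrightarrow> A \<inter> B = {}"
    using Orb_disj by blast
  have f: "\<And>A. A \<in> Orb ` (UNIV - S) \<Longrightarrow> finite A \<and> card A = 2 * card H"
    using Orb_card[OF assms] by (auto simp: S_def)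
  have p: "2 * card H > 0" using Hpos[OF assms] by simp
  show "finite (Orb ` (UNIV - S)) \<longleftrightarrow> finite (UNIV - S)"
    "card (UNIV - S) = (2 * card H) * card (Orb ` (UNIV - S))"
    using part_count[of "Orb ` (UNIV - S)" "2 * card H", OF d f p] Union_nS[OF assms] by auto
qed

lemma star_imp:
  assumes "finite H" "u \<in> S"
  shows "odd (card H) \<and> nat_mult (card H) w \<in> range (\<lambda>x. \<alpha> x - x)"
proof
  let ?q = "card H"
  have h: "bt u - u \<in> H" using assms(2) by (simp add: S_def)
  show "odd ?q" using odd_H[OF assms(1) h] .
  have "nat_mult ?q (bt u - u) = 0" using sg_annih[OF H_SG assms(1) h] .
  moreover have "bt u - u = (\<alpha> u - u) + w" by (simp add: bt_def)
  ultimately have "(\<alpha> (nat_mult ?q u) - nat_mult ?q u) + nat_mult ?q w = 0"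
    by (simp add: nm_plus nm_diff anm)
  then have "nat_mult ?q w = \<alpha> (- nat_mult ?q u) - (- nat_mult ?q u)"
    by (simp add: aneg add_eq_0_iff2 algebra_simps)
  then show "nat_mult ?q w \<in> range (\<lambda>x. \<alpha> x - x)" by blast
qed

lemma imp_star:
  assumes "odd (card H)" "nat_mult (card H) w = \<alpha> x - x"
  shows "S \<noteq> {}"
proof -
  obtain m where m: "card H = Suc (2 * m)" using assms(1) oddE by fastforce
  define y where "y = nat_mult m w"
  have "nat_mult (2 * m) w = nat_mult m (nat_mult 2 w)" by (metis mult.commute nm_mult)
  then have "nat_mult (card H) w = w + (y + y)" using m by (simp add: nm_two nm_plus y_def)
  then have wx: "\<alpha> x - x = w + (y + y)" using assms(2) by simp
  have mc: "nat_mult m c = \<alpha> y + y" by (simp add: c_def nm_plus anm y_def)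
  define u where "u = - (x + y)"
  have "bt u - u = - (\<alpha> y + y)"
  proof -
    have "bt u - u = - \<alpha> x - \<alpha> y + w + x + y" by (simp add: u_def bt_def aneg add adiff)
    also have "\<dots> = - (\<alpha> y + y) + ((w + (y + y)) - (\<alpha> x - x))"
      by (simp add: algebra_simps)
    also have "\<dots> = - (\<alpha> y + y)" using wx by simp
    finally show ?thesis .
  qed
  then have "bt u - u \<in> H" using mc Hneg Hnm cH by metis
  then show ?thesis by (auto simp: S_def)
qed

lemma suff_star:
  assumes "finite H" "range (\<lambda>x. \<alpha> x - x) = {x. \<alpha> x + x = 0}"
  shows "nat_mult (card H) w \<in> range (\<lambda>x. \<alpha> x - x)"
proof -
  have "\<alpha> (nat_mult (card H) w) + nat_mult (card H) w = nat_mult (card H) c"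
    by (simp add: anm c_def nm_plus)
  also have "\<dots> = 0" using sg_annih[OF H_SG assms(1) cH] .
  finally show ?thesis using assms(2) by simp
qed

definition K where "K = {x. \<alpha> x - x = 0}"

lemma S_transl:
  assumes "finite H" "u0 \<in> S"
  shows "S = (+) u0 ` K"
proof -
  have oq: "odd (card H)" using odd_H assms by (simp add: S_def)
  have h0: "bt u0 - u0 \<in> H" using assms by (simp add: S_def)
  have key: "u \<in> S \<longleftrightarrow> u - u0 \<in> K" for u
  proof -
    have e: "(bt u - u) - (bt u0 - u0) = \<alpha> (u - u0) - (u - u0)"
      by (simp add: bt_def adiff; simp add: algebra_simps)
    show ?thesis
    proof
      assume "u \<in> S"
      then have "bt u - u \<in> H" by (simp add: S_def)
      then have yH: "\<alpha> (u - u0) - (u - u0) \<in> H" using h0 Hdiff e by metis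
      let ?y = "\<alpha> (u - u0) - (u - u0)"
      have "\<alpha> ?y = - ?y" by (simp add: adiff ii)
      moreover have "\<alpha> ?y = ?y" using yH alpha_H by blast
      ultimately have "?y + ?y = 0" by (metis add.right_inverse)
      then have "?y = 0" using sg_two_torsion[OF H_SG assms(1) oq yH] by blast
      then show "u - u0 \<in> K" by (simp add: K_def)
    next
      assume "u - u0 \<in> K"
      then have "bt u - u = bt u0 - u0" using e by (simp add: K_def)
      then show "u \<in> S" using h0 by (simp add: S_def)
    qed
  qed
  show ?thesis
  proof
    show "S \<subseteq> (+) u0 ` K"
    proof
      fix u assume "u \<in> S"
      then have "u - u0 \<in> K" using key by blast
      then show "u \<in> (+) u0 ` K" by (rule rev_image_eqI) simp
    qed
    show "(+) u0 ` K \<subseteq> S" using key by auto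
  qed
qed

lemma nS_transl:
  assumes "finite H" "u0 \<in> S"
  shows "UNIV - S = (+) u0 ` (UNIV - K)"
proof -
  have b: "bij ((+) u0)" by (rule bijI) (auto simp: inj_def intro: surjI[of _ "\<lambda>x. x - u0"])
  show ?thesis unfolding S_transl[OF assms] using bij_image_Compl_eq[OF b]
    by (simp add: Compl_eq_Diff_UNIV)
qed

end
theorem theorem3p1:
  fixes \<alpha> :: "'a::ab_group_add \<Rightarrow> 'a" and w :: 'a and \<beta> :: "'a \<Rightarrow> 'a"
  assumes aut: "group_aut \<alpha>"
    and invol: "\<alpha> \<circ> \<alpha> = id"
    and beta_def: "\<beta> = (\<lambda>u. \<alpha> u + w)"
  defines "H \<equiv> subgroup_gen {\<alpha> w + w}"
    and "K \<equiv> {x. \<alpha> x - x = 0}"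
    and "oddO \<equiv> {Y \<in> orbits \<beta>. finite Y \<and> odd (card Y)}"
    and "evenO \<equiv> {Y \<in> orbits \<beta>. finite Y \<and> even (card Y)}"
  shows
    "(infinite H \<longrightarrow> (\<forall>u. infinite (orbit_of \<beta> u))) \<and>
     (finite H \<longrightarrow>
       (let q0 = card H;
            star = (odd q0 \<and> nat_mult q0 w \<in> range (\<lambda>x. \<alpha> x - x))
        in (\<forall>u. finite (orbit_of \<beta> u) \<and>
                ((card (orbit_of \<beta> u) = q0 \<and> odd q0) \<or> card (orbit_of \<beta> u) = 2 * q0))
         \<and> (oddO \<noteq> {} \<longleftrightarrow> star)
         \<and> ((odd q0 \<and> range (\<lambda>x. \<alpha> x - x) = {x. \<alpha> x + x = 0}) \<longrightarrow> star)
         \<and> (star \<longrightarrow>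
              (finite oddO \<longleftrightarrow> finite K) \<and>
              (finite K \<longrightarrow> real (card oddO) = real (card K) / real q0) \<and>
              (finite evenO \<longleftrightarrow> finite (UNIV - K)) \<and>
              (finite (UNIV - K) \<longrightarrow>
                 real (card evenO) = real (card (UNIV - K)) / real (2 * q0)))
         \<and> (\<not> star \<longrightarrow>
              oddO = {} \<and>
              (finite evenO \<longleftrightarrow> finite (UNIV :: 'a set)) \<and>
              (finite (UNIV :: 'a set) \<longrightarrow>
                 real (card evenO) = real (card (UNIV :: 'a set)) / real (2 * q0)))))"
proof -
  have addA: "\<And>x y. \<alpha> (x + y) = \<alpha> x + \<alpha> y" using aut by (simp add: group_aut_def)
  have iiA: "\<And>x. \<alpha> (\<alpha> x) = x" using invol by (metis comp_apply id_apply)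
  interpret I: invo \<alpha> w by (unfold_locales) (simp_all add: addA iiA)
  have bt: "\<beta> = I.bt" using beta_def by (simp add: fun_eq_iff I.bt_def)
  have HH: "H = I.H" by (simp add: H_def I.H_def I.c_def)
  have KK: "K = I.K" by (simp add: K_def I.K_def)
  show ?thesis
  proof (intro conjI impI)
    assume "infinite H"
    then show "\<forall>u. infinite (orbit_of \<beta> u)" using I.orbit_infinite HH bt by simp
  next
    assume fin: "finite H"
    have fin': "finite I.H" using fin HH by simp
    have oO: "oddO = I.Orb ` I.S" using I.oddO_eq[OF fin'] by (simp add: oddO_def bt)
    have eO: "evenO = I.Orb ` (UNIV - I.S)" using I.evenO_eq[OF fin'] by (simp add: evenO_def bt)
    define q where "q = card H"
    have qq: "q = card I.H" by (simp add: q_def HH)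
    define star where "star = (odd q \<and> nat_mult q w \<in> range (\<lambda>x. \<alpha> x - x))"
    have star_iff: "star \<longleftrightarrow> I.S \<noteq> {}"
    proof
      assume star then obtain x where "odd (card I.H)" "nat_mult (card I.H) w = \<alpha> x - x"
        unfolding star_def qq by blast
      then show "I.S \<noteq> {}" by (rule I.imp_star)
    next
      assume "I.S \<noteq> {}" then obtain u where "u \<in> I.S" by blast
      then show star using I.star_imp[OF fin'] unfolding star_def qq by blast
    qed
    have qpos: "q > 0" using I.Hpos[OF fin'] qq by simp
    have A: "\<forall>u. finite (orbit_of \<beta> u) \<and>
                ((card (orbit_of \<beta> u) = q \<and> odd q) \<or> card (orbit_of \<beta> u) = 2 * q)"
    proof
      fix u
      show "finite (orbit_of \<beta> u) \<and>
                ((card (orbit_of \<beta> u) = q \<and> odd q) \<or> card (orbit_of \<beta> u) = 2 * q)"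
        using I.Orb_card[OF fin', of u] I.odd_H[OF fin', of u] unfolding bt I.orbit_eq qq
        by (cases "I.bt u - u \<in> I.H") auto
    qed
    have B: "oddO \<noteq> {} \<longleftrightarrow> star" using oO star_iff by simp
    have C: "(odd q \<and> range (\<lambda>x. \<alpha> x - x) = {x. \<alpha> x + x = 0}) \<longrightarrow> star"
      using I.suff_star[OF fin'] unfolding star_def qq by blast
    have D: "star \<longrightarrow>
              (finite oddO \<longleftrightarrow> finite K) \<and>
              (finite K \<longrightarrow> real (card oddO) = real (card K) / real q) \<and>
              (finite evenO \<longleftrightarrow> finite (UNIV - K)) \<and>
              (finite (UNIV - K) \<longrightarrow>
                 real (card evenO) = real (card (UNIV - K)) / real (2 * q))"
    proof
      assume star
      then obtain u0 where u0: "u0 \<in> I.S" using star_iff by blast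
      have inj: "inj ((+) u0)" by (auto simp: inj_def)
      have S1: "I.S = (+) u0 ` K" using I.S_transl[OF fin' u0] KK by simp
      have S2: "UNIV - I.S = (+) u0 ` (UNIV - K)" using I.nS_transl[OF fin' u0] KK by simp
      have fS: "finite I.S \<longleftrightarrow> finite K" unfolding S1
        using finite_image_iff[OF inj_on_subset[OF inj]] by blast
      have cS: "card I.S = card K" unfolding S1 by (rule card_image[OF inj_on_subset[OF inj]]) simp
      have fnS: "finite (UNIV - I.S) \<longleftrightarrow> finite (UNIV - K)" unfolding S2
        using finite_image_iff[OF inj_on_subset[OF inj]] by blast
      have cnS: "card (UNIV - I.S) = card (UNIV - K)" unfolding S2
        by (rule card_image[OF inj_on_subset[OF inj]]) simp
      have e1: "card K = q * card oddO" using I.count_S(2)[OF fin'] cS oO qq by simp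
      have e2: "card (UNIV - K) = (2 * q) * card evenO" using I.count_nS(2)[OF fin'] cnS eO qq by simp
      show "(finite oddO \<longleftrightarrow> finite K) \<and>
              (finite K \<longrightarrow> real (card oddO) = real (card K) / real q) \<and>
              (finite evenO \<longleftrightarrow> finite (UNIV - K)) \<and>
              (finite (UNIV - K) \<longrightarrow>
                 real (card evenO) = real (card (UNIV - K)) / real (2 * q))"
        using I.count_S(1)[OF fin'] I.count_nS(1)[OF fin'] fS fnS e1 e2 oO eO qpos
        by (simp add: field_simps)
    qed
    have E: "\<not> star \<longrightarrow>
              oddO = {} \<and>
              (finite evenO \<longleftrightarrow> finite (UNIV :: 'a set)) \<and>
              (finite (UNIV :: 'a set) \<longrightarrow>
                 real (card evenO) = real (card (UNIV :: 'a set)) / real (2 * q))"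
    proof
      assume "\<not> star"
      then have S0: "I.S = {}" using star_iff by blast
      have e2: "card (UNIV :: 'a set) = (2 * q) * card evenO"
        using I.count_nS(2)[OF fin'] eO qq S0 by simp
      show "oddO = {} \<and>
              (finite evenO \<longleftrightarrow> finite (UNIV :: 'a set)) \<and>
              (finite (UNIV :: 'a set) \<longrightarrow>
                 real (card evenO) = real (card (UNIV :: 'a set)) / real (2 * q))"
        using I.count_nS(1)[OF fin'] S0 oO eO e2 qpos by (simp add: field_simps)
    qed
    show "let q0 = card H;
            star = (odd q0 \<and> nat_mult q0 w \<in> range (\<lambda>x. \<alpha> x - x))
        in (\<forall>u. finite (orbit_of \<beta> u) \<and>
                ((card (orbit_of \<beta> u) = q0 \<and> odd q0) \<or> card (orbit_of \<beta> u) = 2 * q0))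
         \<and> (oddO \<noteq> {} \<longleftrightarrow> star)
         \<and> ((odd q0 \<and> range (\<lambda>x. \<alpha> x - x) = {x. \<alpha> x + x = 0}) \<longrightarrow> star)
         \<and> (star \<longrightarrow>
              (finite oddO \<longleftrightarrow> finite K) \<and>
              (finite K \<longrightarrow> real (card oddO) = real (card K) / real q0) \<and>
              (finite evenO \<longleftrightarrow> finite (UNIV - K)) \<and>
              (finite (UNIV - K) \<longrightarrow>
                 real (card evenO) = real (card (UNIV - K)) / real (2 * q0)))
         \<and> (\<not> star \<longrightarrow>
              oddO = {} \<and>
              (finite evenO \<longleftrightarrow> finite (UNIV :: 'a set)) \<and>
              (finite (UNIV :: 'a set) \<longrightarrow>
                 real (card evenO) = real (card (UNIV :: 'a set)) / real (2 * q0)))"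
      unfolding Let_def q_def[symmetric] star_def[symmetric]
      using A B C D E by blast
  qed
qed

end
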